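(* Let $\boldsymbol{A}$ be the adjacency matrix of an undirected graph without self-loops on a finite vertex set $\boldsymbol{V}=\{1,\dots,N\}$. Let $\mathcal{R}_e\subset\boldsymbol{V}$ be a nonempty set of egos, $n_e=|\mathcal{R}_e|$, and $\mathcal{R}_a\subset\boldsymbol{V}\setminus\mathcal{R}_e$ a set of alters, each alter $j$ having a unique recruiting ego $e(j)\in\mathcal{R}_e$ with $A_{j\,e(j)}=1$. Let $\boldsymbol{Z}\in\{0,1\}^N$ have independent components with $\Pr(Z_i=1)=p_z\,\mathbb{I}\{i\in\mathcal{R}_e\}$ for a known $p_z\in(0,1)$, and let $F_i=\mathbb{I}\{\sum_{j\neq i}Z_jA_{ij}>0\}$. Each unit $i\in\mathcal{R}_e\cup\mathcal{R}_a$ has fixed real potential outcomes $Y_i(z,f)$, $z,f\in\{0,1\}$, and observed outcome $Y_i=\sum_{z,f\in\{0,1\}}Y_i(z,f)\mathbb{I}\{Z_i=z,F_i=f\}$. Assume there is a constant $\kappa$ such that $Y_i(1,1)-Y_i(0,1)=\kappa[Y_i(1,0)-Y_i(0,0)]$ for all $i\in\mathcal{R}_e$. For $i\in\mathcal{R}_e$ let $\pi_i^e=\Pr(F_i=1)$ (over $\boldsymbol{Z}$), and assume $1+\pi_i^e(\kappa-1)\neq0$ for all $i\in\mathcal{R}_e$. Define $$DE=\frac1{n_e}\sum_{i\in\mathcal{R}_e}[Y_i(1,0)-Y_i(0,0)],\qquad \widehat{DE}_{adj}=\frac1{n_e}\sum_{i\in\mathcal{R}_e}\frac{1}{1+\pi_i^e(\kappa-1)}\Big[\frac{\mathbb{I}\{Z_i=1\}Y_i}{p_z}-\frac{\mathbb{I}\{Z_i=0\}Y_i}{1-p_z}\Big].$$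 Then $\mathbb{E}_{\boldsymbol{Z}}[\widehat{DE}_{adj}]=DE$.
   Context: Design-based setting: the network, the sample, the recruitment map and the potential outcomes are fixed; the only randomness is the treatment assignment $\boldsymbol{Z}$, and expectations are over $\boldsymbol{Z}$. The observed network links each alter only to its recruiting ego, while the true network $\boldsymbol{A}$ may contain ego–ego edges. *)

theory Defs
  imports "HOL-Probability.Probability"
begin

text \<open>Treatment assignment Z : nat \<Rightarrow> bool (value False outside V).\<close>

definition Zdist :: "nat \<Rightarrow> nat set \<Rightarrow> real \<Rightarrow> (nat \<Rightarrow> bool) pmf" where
  "Zdist N Eg pz = Pi_pmf {1..N} False (\<lambda>i. bernoulli_pmf (if i \<in> Eg then pz else 0))"

definition exposure :: "nat \<Rightarrow> (nat \<Rightarrow> nat \<Rightarrow> real) \<Rightarrow> (nat \<Rightarrow> bool) \<Rightarrow> nat \<Rightarrow> bool" where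
  "exposure N A Z i = ((\<Sum>j\<in>{1..N} - {i}. of_bool (Z j) * A i j) > 0)"

definition obs_outcome :: "nat \<Rightarrow> (nat \<Rightarrow> nat \<Rightarrow> real) \<Rightarrow> (nat \<Rightarrow> bool \<Rightarrow> bool \<Rightarrow> real)
    \<Rightarrow> (nat \<Rightarrow> bool) \<Rightarrow> nat \<Rightarrow> real" where
  "obs_outcome N A Y Z i =
     (\<Sum>z\<in>{False, True}. \<Sum>f\<in>{False, True}.
        Y i z f * of_bool (Z i = z \<and> exposure N A Z i = f))"

definition pi_e :: "nat \<Rightarrow> (nat \<Rightarrow> nat \<Rightarrow> real) \<Rightarrow> nat set \<Rightarrow> real \<Rightarrow> nat \<Rightarrow> real" where
  "pi_e N A Eg pz i = measure_pmf.prob (Zdist N Eg pz) {Z. exposure N A Z i}"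

definition DE :: "nat set \<Rightarrow> (nat \<Rightarrow> bool \<Rightarrow> bool \<Rightarrow> real) \<Rightarrow> real" where
  "DE Eg Y = (1 / real (card Eg)) * (\<Sum>i\<in>Eg. Y i True False - Y i False False)"

definition DE_adj_hat :: "nat \<Rightarrow> (nat \<Rightarrow> nat \<Rightarrow> real) \<Rightarrow> nat set \<Rightarrow> real \<Rightarrow> real
    \<Rightarrow> (nat \<Rightarrow> bool \<Rightarrow> bool \<Rightarrow> real) \<Rightarrow> (nat \<Rightarrow> bool) \<Rightarrow> real" where
  "DE_adj_hat N A Eg pz \<kappa> Y Z = (1 / real (card Eg)) *
     (\<Sum>i\<in>Eg. (1 / (1 + pi_e N A Eg pz i * (\<kappa> - 1))) *
        (of_bool (Z i) * obs_outcome N A Y Z i / pz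
         - of_bool (\<not> Z i) * obs_outcome N A Y Z i / (1 - pz)))"

end

theory Submission
  imports Defs
begin

lemma fin_Pi: "finite B \<Longrightarrow> finite (set_pmf (Pi_pmf B False (\<lambda>i. bernoulli_pmf (q i))))"
  by (subst set_Pi_pmf) (auto intro!: finite_PiE_dflt)

lemma obs_eq: "obs_outcome N A Y Z i = Y i (Z i) (exposure N A Z i)"
  unfolding obs_outcome_def by (cases "Z i"; cases "exposure N A Z i") auto

lemma exp_upd: "exposure N A (f(i:=y)) i = exposure N A f i"
  unfolding exposure_def by (intro arg_cong2[where f="(<)"] refl sum.cong) auto

lemma L1:
  fixes G :: "bool \<Rightarrow> bool \<Rightarrow> real"
  assumes i: "i \<in> Eg" "Eg \<subseteq> {1..N}" and pz: "0 \<le> pz" "pz \<le> 1"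
  defines "P \<equiv> Pi_pmf ({1..N} - {i}) False (\<lambda>i. bernoulli_pmf (if i \<in> Eg then pz else 0))"
  shows "measure_pmf.expectation (Zdist N Eg pz) (\<lambda>Z. G (Z i) (exposure N A Z i)) =
     pz * measure_pmf.expectation P (\<lambda>f. G True (exposure N A f i))
     + (1 - pz) * measure_pmf.expectation P (\<lambda>f. G False (exposure N A f i))"
proof -
  have ins: "{1..N} = insert i ({1..N} - {i})" using i by auto
  have Z: "Zdist N Eg pz = map_pmf (\<lambda>(y,f). f(i:=y)) (pair_pmf (bernoulli_pmf pz) P)"
    unfolding Zdist_def P_def by (subst ins, subst Pi_pmf_insert) (use i in auto)
  have "measure_pmf.expectation (Zdist N Eg pz) (\<lambda>Z. G (Z i) (exposure N A Z i))
     = measure_pmf.expectation (pair_pmf (bernoulli_pmf pz) P) (\<lambda>(y,f). G y (exposure N A f i))"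
    unfolding Z by (simp add: case_prod_unfold exp_upd)
  also have "\<dots> = (\<Sum>a\<in>UNIV. pmf (bernoulli_pmf pz) a *\<^sub>R
      measure_pmf.expectation (P \<bind> (\<lambda>b. return_pmf (a, b))) (\<lambda>(y,f). G y (exposure N A f i)))"
    unfolding pair_pmf_def
    by (rule pmf_expectation_bind) (auto simp: P_def map_pmf_def[symmetric] intro!: finite_imageI fin_Pi)
  also have "\<dots> = pz * measure_pmf.expectation P (\<lambda>f. G True (exposure N A f i))
     + (1 - pz) * measure_pmf.expectation P (\<lambda>f. G False (exposure N A f i))"
    using pz by (simp add: map_pmf_def[symmetric] UNIV_bool)
  finally show ?thesis .
qed

lemma L2:
  fixes G :: "bool \<Rightarrow> real"
  assumes "finite (set_pmf P)"
  shows "measure_pmf.expectation P (\<lambda>f. G (h f)) =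
     G False + (G True - G False) * measure_pmf.expectation P (\<lambda>f. of_bool (h f))"
proof -
  have "(\<lambda>f. G (h f)) = (\<lambda>f. G False + (G True - G False) * of_bool (h f))"
  proof
    fix f show "G (h f) = G False + (G True - G False) * of_bool (h f)" by (cases "h f") auto
  qed
  then show ?thesis
    using assms by (simp add: integrable_measure_pmf_finite)
qed

theorem proposition3:
  fixes N :: nat
    and A :: "nat \<Rightarrow> nat \<Rightarrow> real"
    and Eg Al :: "nat set"
    and e :: "nat \<Rightarrow> nat"
    and pz \<kappa> :: real
    and Y :: "nat \<Rightarrow> bool \<Rightarrow> bool \<Rightarrow> real"
  assumes A_01: "\<forall>i\<in>{1..N}. \<forall>j\<in>{1..N}. A i j = 0 \<or> A i j = 1"
    and A_sym: "\<forall>i\<in>{1..N}. \<forall>j\<in>{1..N}. A i j = A j i"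
    and A_noloop: "\<forall>i\<in>{1..N}. A i i = 0"
    and Eg_sub: "Eg \<subseteq> {1..N}" and Eg_ne: "Eg \<noteq> {}"
    and Al_sub: "Al \<subseteq> {1..N} - Eg"
    and recruit: "\<forall>j\<in>Al. e j \<in> Eg \<and> A j (e j) = 1"
    and pz: "0 < pz" "pz < 1"
    and kappa: "\<forall>i\<in>Eg. Y i True True - Y i False True = \<kappa> * (Y i True False - Y i False False)"
    and nonzero: "\<forall>i\<in>Eg. 1 + pi_e N A Eg pz i * (\<kappa> - 1) \<noteq> 0"
  shows "measure_pmf.expectation (Zdist N Eg pz) (DE_adj_hat N A Eg pz \<kappa> Y) = DE Eg Y"
proof -
  have finZ: "finite (set_pmf (Zdist N Eg pz))" unfolding Zdist_def by (rule fin_Pi) simp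
  have finEg: "finite Eg" using Eg_sub finite_subset by blast
  have each: "measure_pmf.expectation (Zdist N Eg pz)
      (\<lambda>Z. (1 / (1 + pi_e N A Eg pz i * (\<kappa> - 1))) *
        (of_bool (Z i) * obs_outcome N A Y Z i / pz
         - of_bool (\<not> Z i) * obs_outcome N A Y Z i / (1 - pz)))
      = Y i True False - Y i False False" if i: "i \<in> Eg" for i
  proof -
    define P where "P = Pi_pmf ({1..N} - {i}) False (\<lambda>i. bernoulli_pmf (if i \<in> Eg then pz else 0))"
    have finP: "finite (set_pmf P)" unfolding P_def by (rule fin_Pi) simp
    define q where "q = measure_pmf.expectation P (\<lambda>f. of_bool (exposure N A f i) :: real)"
    have "pi_e N A Eg pz i = measure_pmf.expectation (Zdist N Eg pz) (\<lambda>Z. of_bool (exposure N A Z i) :: real)"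
    proof -
      have "(\<lambda>Z. of_bool (exposure N A Z i) :: real) = indicator {Z. exposure N A Z i}"
        by (auto simp: indicator_def fun_eq_iff)
      then show ?thesis unfolding pi_e_def by simp
    qed
    also have "\<dots> = q"
      using L1[OF i Eg_sub, of pz "\<lambda>y x. of_bool x" A] pz
      unfolding q_def P_def by (simp add: algebra_simps)
    finally have piq: "pi_e N A Eg pz i = q" .
    define c where "c = 1 / (1 + q * (\<kappa> - 1))"
    have "measure_pmf.expectation (Zdist N Eg pz)
      (\<lambda>Z. (1 / (1 + pi_e N A Eg pz i * (\<kappa> - 1))) *
        (of_bool (Z i) * obs_outcome N A Y Z i / pz
         - of_bool (\<not> Z i) * obs_outcome N A Y Z i / (1 - pz)))
      = c * measure_pmf.expectation (Zdist N Eg pz)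
        (\<lambda>Z. (\<lambda>y x. of_bool y * Y i y x / pz - of_bool (\<not> y) * Y i y x / (1 - pz)) (Z i) (exposure N A Z i))"
      by (simp add: piq c_def obs_eq)
    also have "\<dots> = c * (pz * measure_pmf.expectation P (\<lambda>f. Y i True (exposure N A f i) / pz)
       + (1 - pz) * measure_pmf.expectation P (\<lambda>f. - (Y i False (exposure N A f i) / (1 - pz))))"
      by (subst L1[OF i Eg_sub]) (use pz in \<open>simp_all add: P_def\<close>)
    also have "\<dots> = c * (measure_pmf.expectation P (\<lambda>f. Y i True (exposure N A f i))
       - measure_pmf.expectation P (\<lambda>f. Y i False (exposure N A f i)))"
      using pz by simp
    also have "\<dots> = c * (Y i True False - Y i False False + q * ((Y i True True - Y i False True) - (Y i True False - Y i False False)))"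
      by (simp add: L2[OF finP, of "Y i True"] L2[OF finP, of "Y i False"] q_def[symmetric]
          algebra_simps)
    also have "\<dots> = c * ((Y i True False - Y i False False) * (1 + q * (\<kappa> - 1)))"
    proof -
      have k: "Y i True True - Y i False True = \<kappa> * (Y i True False - Y i False False)"
        using kappa i by blast
      show ?thesis unfolding k by (simp add: algebra_simps)
    qed
    also have "\<dots> = Y i True False - Y i False False"
    proof -
      have "1 + q * (\<kappa> - 1) \<noteq> 0" using nonzero i piq by auto
      then show ?thesis by (simp add: c_def)
    qed
    finally show ?thesis .
  qed
  show ?thesis
    unfolding DE_adj_hat_def DE_def
    apply (subst integral_mult_right_zero)
    apply (subst Bochner_Integration.integral_sum)
     apply (simp add: integrable_measure_pmf_finite finZ)
    apply (rule arg_cong[where f="\<lambda>x. _ * x"])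
    apply (rule sum.cong[OF refl])
    apply (rule each)
    apply assumption
    done
qed

end
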